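(* Let $n \geq 3$ and let $S$ be a $4$-cap free, $n$-cup free configuration. If $S$ contains a pair of interweaved laced $(n-1)$-cups, then $S$ contains a $(3, n-1)$-gon.
   Context: A configuration is a finite set $S$ of points with a linear order $<$ and, for every $3$-element subset, an arbitrary assignment declaring it either a cap or a cup. Points $x_1<\cdots<x_a$ form an $a$-cup (resp. $a$-cap) if every consecutive triple $\{x_{i-1},x_i,x_{i+1}\}$, $1<i<a$, is assigned cup (resp. cap); $1$- and $2$-element sets are both caps and cups. The size of a cup is its number of points; a cup $x_1\cdots x_a$ runs from (starts with) $x_1$ to (ends with) $x_a$. Two cups $C_1$, $C_2$ running from $p$ to $r$ and from $q$ to $s$ respectively are interweaved if $p<q\le r<s$. An $(n-1)$-cup $C$ from $p$ to $q$ is laced if there exist a cup $C_p$ ending with $p$ and a cup $C_q$ starting with $q$ such that $|C_p|+|C_q|=n-1$. A (weak) $(a,b)$-gon is a pair consisting of an $a$-cap and a $b$-cup with the same two endpoints (they may share other vertices). *)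

theory Defs
  imports Main
begin

text \<open>A configuration is a finite set S of points of a linearly ordered type together with
  an assignment to each 3-element subset {x<y<z} of being a cup (cupT x y z) or a cap
  (\<not> cupT x y z).  Only the values of cupT on strictly increasing triples from S matter.\<close>

definition is_cup :: "'a::linorder set \<Rightarrow> ('a \<Rightarrow> 'a \<Rightarrow> 'a \<Rightarrow> bool) \<Rightarrow> 'a list \<Rightarrow> bool" where
  "is_cup S cupT xs \<longleftrightarrow> xs \<noteq> [] \<and> set xs \<subseteq> S \<and> sorted_wrt (<) xs \<and>
     (\<forall>i. 0 < i \<and> i + 1 < length xs \<longrightarrow> cupT (xs!(i-1)) (xs!i) (xs!(i+1)))"

definition is_cap :: "'a::linorder set \<Rightarrow> ('a \<Rightarrow> 'a \<Rightarrow> 'a \<Rightarrow> bool) \<Rightarrow> 'a list \<Rightarrow> bool" where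
  "is_cap S cupT xs \<longleftrightarrow> xs \<noteq> [] \<and> set xs \<subseteq> S \<and> sorted_wrt (<) xs \<and>
     (\<forall>i. 0 < i \<and> i + 1 < length xs \<longrightarrow> \<not> cupT (xs!(i-1)) (xs!i) (xs!(i+1)))"

definition laced :: "'a::linorder set \<Rightarrow> ('a \<Rightarrow> 'a \<Rightarrow> 'a \<Rightarrow> bool) \<Rightarrow> nat \<Rightarrow> 'a list \<Rightarrow> bool" where
  "laced S cupT n C \<longleftrightarrow> is_cup S cupT C \<and> length C = n - 1 \<and>
     (\<exists>Cp Cq. is_cup S cupT Cp \<and> last Cp = hd C \<and> is_cup S cupT Cq \<and> hd Cq = last C \<and>
              length Cp + length Cq = n - 1)"

definition interweaved :: "'a::linorder list \<Rightarrow> 'a list \<Rightarrow> bool" where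
  "interweaved C1 C2 \<longleftrightarrow> hd C1 < hd C2 \<and> hd C2 \<le> last C1 \<and> last C1 < last C2"

definition has_gon :: "'a::linorder set \<Rightarrow> ('a \<Rightarrow> 'a \<Rightarrow> 'a \<Rightarrow> bool) \<Rightarrow> nat \<Rightarrow> nat \<Rightarrow> bool" where
  "has_gon S cupT a b \<longleftrightarrow> (\<exists>A B. is_cap S cupT A \<and> length A = a \<and> is_cup S cupT B \<and> length B = b
      \<and> hd A = hd B \<and> last A = last B)"

end

theory Submission
  imports Defs
begin

fun tri :: "('a \<Rightarrow> 'a \<Rightarrow> 'a \<Rightarrow> bool) \<Rightarrow> 'a list \<Rightarrow> bool" where
  "tri P (x # y # z # zs) = (P x y z \<and> tri P (y # z # zs))"
| "tri P _ = True"

lemma tri_nth: "tri P xs \<longleftrightarrow> (\<forall>i. 0 < i \<and> i + 1 < length xs \<longrightarrow> P (xs!(i-1)) (xs!i) (xs!(i+1)))"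
proof (induction P xs rule: tri.induct)
  case (1 P x y z zs)
  show ?case
  proof
    assume "tri P (x # y # z # zs)"
    then have a: "P x y z" and b: "tri P (y # z # zs)" by auto
    show "\<forall>i. 0 < i \<and> i + 1 < length (x # y # z # zs) \<longrightarrow> P ((x # y # z # zs)!(i-1)) ((x # y # z # zs)!i) ((x # y # z # zs)!(i+1))"
    proof (intro allI impI)
      fix i assume i: "0 < i \<and> i + 1 < length (x # y # z # zs)"
      show "P ((x # y # z # zs)!(i-1)) ((x # y # z # zs)!i) ((x # y # z # zs)!(i+1))"
      proof (cases "i = 1")
        case True then show ?thesis using a by simp
      next
        case False
        then obtain j where j: "i = Suc j" "0 < j" using i by (cases i) auto
        have "P ((y # z # zs)!(j-1)) ((y # z # zs)!j) ((y # z # zs)!(j+1))"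
          using b 1 i j by auto
        then show ?thesis using j by (cases j) auto
      qed
    qed
  next
    assume h: "\<forall>i. 0 < i \<and> i + 1 < length (x # y # z # zs) \<longrightarrow> P ((x # y # z # zs)!(i-1)) ((x # y # z # zs)!i) ((x # y # z # zs)!(i+1))"
    have a: "P x y z" using h[rule_format, of 1] by simp
    have "\<forall>j. 0 < j \<and> j + 1 < length (y # z # zs) \<longrightarrow> P ((y # z # zs)!(j-1)) ((y # z # zs)!j) ((y # z # zs)!(j+1))"
    proof (intro allI impI)
      fix j assume j: "0 < j \<and> j + 1 < length (y # z # zs)"
      have "P ((x # y # z # zs)!(Suc j-1)) ((x # y # z # zs)!Suc j) ((x # y # z # zs)!(Suc j+1))"
        using h j by auto
      then show "P ((y # z # zs)!(j-1)) ((y # z # zs)!j) ((y # z # zs)!(j+1))" using j by (cases j) auto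
    qed
    then show "tri P (x # y # z # zs)" using a 1 by simp
  qed
next
  case ("2_1" P) then show ?case by simp
next
  case ("2_2" P v) then show ?case by simp
next
  case ("2_3" P v va) then show ?case by simp
qed

lemma tri_append:
  assumes "tri P xs" "tri P ys"
    "length xs \<ge> 2 \<Longrightarrow> ys \<noteq> [] \<Longrightarrow> P (last (butlast xs)) (last xs) (hd ys)"
    "xs \<noteq> [] \<Longrightarrow> length ys \<ge> 2 \<Longrightarrow> P (last xs) (hd ys) (hd (tl ys))"
  shows "tri P (xs @ ys)"
  using assms
proof (induction xs)
  case Nil then show ?case by simp
next
  case (Cons x xs)
  show ?case
  proof (cases xs)
    case Nil
    then show ?thesis using Cons.prems
      by (cases ys; cases "tl ys") auto
  next
    case (Cons y xs')
    note xs = this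
    show ?thesis
    proof (cases xs')
      case Nil
      have ih: "tri P ([y] @ ys)"
        using Cons.IH Cons.prems xs Nil by auto
      show ?thesis using ih Cons.prems xs Nil by (cases ys) auto
    next
      case (Cons z xs'')
      have ih: "tri P (xs @ ys)"
        using Cons.IH Cons.prems xs Cons by auto
      show ?thesis using ih Cons.prems xs Cons by auto
    qed
  qed
qed


lemma tri_prefix: assumes "tri P (xs @ ys)" shows "tri P xs"
  unfolding tri_nth
proof (intro allI impI)
  fix i assume i: "0 < i \<and> i + 1 < length xs"
  then have "P ((xs@ys)!(i-1)) ((xs@ys)!i) ((xs@ys)!(i+1))" using assms unfolding tri_nth by auto
  moreover have "i - 1 < length xs" using i by linarith
  ultimately show "P (xs!(i-1)) (xs!i) (xs!(i+1))" using i by (simp add: nth_append)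
qed

lemma is_cup_tri: "is_cup S c xs \<longleftrightarrow> xs \<noteq> [] \<and> set xs \<subseteq> S \<and> sorted_wrt (<) xs \<and> tri c xs"
  by (simp add: is_cup_def tri_nth)

lemma is_cap_tri: "is_cap S c xs \<longleftrightarrow> xs \<noteq> [] \<and> set xs \<subseteq> S \<and> sorted_wrt (<) xs \<and> tri (\<lambda>x y z. \<not> c x y z) xs"
  by (simp add: is_cap_def tri_nth)

lemma sw_hd: "sorted_wrt (<) xs \<Longrightarrow> x \<in> set xs \<Longrightarrow> hd xs \<le> (x::'a::linorder)"
  by (cases xs) auto

lemma sw_tl: "sorted_wrt (<) xs \<Longrightarrow> x \<in> set (tl xs) \<Longrightarrow> hd xs < (x::'a::linorder)"
  by (cases xs) auto

lemma sw_butlast: "sorted_wrt (<) xs \<Longrightarrow> x \<in> set (butlast xs) \<Longrightarrow> x < (last xs::'a::linorder)"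
  by (cases xs rule: rev_exhaust) (auto simp: sorted_wrt_append)

lemma sw_last: "sorted_wrt (<) xs \<Longrightarrow> x \<in> set xs \<Longrightarrow> x \<le> (last xs::'a::linorder)"
  by (cases xs rule: rev_exhaust) (auto simp: sorted_wrt_append)

lemma butlast2[simp]: "butlast (xs @ [a, b]) = xs @ [a]"
  by (induction xs) auto

lemma split2_end: "length xs \<ge> 2 \<Longrightarrow> \<exists>ys a b. xs = ys @ [a, b]"
proof -
  assume "length xs \<ge> 2"
  then obtain ys b where 1: "xs = ys @ [b]" by (cases xs rule: rev_exhaust) auto
  with \<open>length xs \<ge> 2\<close> obtain zs a where "ys = zs @ [a]" by (cases ys rule: rev_exhaust) auto
  with 1 show ?thesis by auto
qed

lemma bl_in: "length xs \<ge> 2 \<Longrightarrow> last (butlast xs) \<in> set xs"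
  by (metis One_nat_def Suc_1 Suc_le_eq in_set_butlastD last_in_set length_butlast length_greater_0_conv zero_less_diff)

lemma bl_in2: "length xs \<ge> 2 \<Longrightarrow> last (butlast xs) \<in> set (butlast xs)"
  by (metis One_nat_def Suc_1 Suc_le_eq last_in_set length_butlast length_greater_0_conv zero_less_diff)

lemma tl_in: "length xs \<ge> 2 \<Longrightarrow> hd (tl xs) \<in> set (tl xs)"
  by (cases xs; cases "tl xs") auto

theorem lemma5p2:
  fixes S :: "'a::linorder set" and cupT :: "'a \<Rightarrow> 'a \<Rightarrow> 'a \<Rightarrow> bool" and n :: nat
  assumes "finite S" and "n \<ge> 3"
    and "\<not> (\<exists>C. is_cap S cupT C \<and> length C = 4)"
    and "\<not> (\<exists>C. is_cup S cupT C \<and> length C = n)"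
    and "\<exists>C1 C2. laced S cupT n C1 \<and> laced S cupT n C2 \<and> interweaved C1 C2"
  shows "has_gon S cupT 3 (n - 1)"
proof -
  have nocup: "\<And>W. is_cup S cupT W \<Longrightarrow> length W = n \<Longrightarrow> False" using assms(4) by blast
  have nocap: "False" if "a\<in>S" "b\<in>S" "c\<in>S" "d\<in>S" "a<b" "b<c" "c<d" "\<not>cupT a b c" "\<not>cupT b c d" for a b c d
  proof -
    have "is_cap S cupT [a,b,c,d]" using that by (auto simp: is_cap_tri intro: less_trans)
    then show False using assms(3) by force
  qed
  have gon: "has_gon S cupT 3 (n-1)" if "y \<in> S" "x < y" "y < z" "\<not> cupT x y z" "is_cup S cupT B"
     "length B = n-1" "hd B = x" "last B = z" for x y z B
  proof -
    have "B \<noteq> []" "set B \<subseteq> S" using that(5) by (auto simp: is_cup_tri)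
    then have "x \<in> S" "z \<in> S" using that(7,8) hd_in_set last_in_set by blast+
    then have "is_cap S cupT [x,y,z]" using that by (simp add: is_cap_tri)
    then show ?thesis unfolding has_gon_def using that by (intro exI[of _ "[x,y,z]"] exI[of _ B]) auto
  qed
  obtain C1 C2 where L1: "laced S cupT n C1" and L2: "laced S cupT n C2" and IW: "interweaved C1 C2"
    using assms(5) by blast
  have C1c: "is_cup S cupT C1" and len1: "length C1 = n - 1" using L1 by (auto simp: laced_def)
  have C2c: "is_cup S cupT C2" and len2: "length C2 = n - 1" using L2 by (auto simp: laced_def)
  define p r q s where "p = hd C1" "r = last C1" "q = hd C2" "s = last C2"
  have ends: "hd C1 = p" "last C1 = r" "hd C2 = q" "last C2 = s" using p_r_q_s_def by simp_all
  have pq: "p < q" and qr: "q \<le> r" and rs: "r < s" using IW by (auto simp: interweaved_def p_r_q_s_def)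
  have C1ne: "C1 \<noteq> []" "set C1 \<subseteq> S" "sorted_wrt (<) C1" "tri cupT C1" using C1c by (auto simp: is_cup_tri)
  have C2ne: "C2 \<noteq> []" "set C2 \<subseteq> S" "sorted_wrt (<) C2" "tri cupT C2" using C2c by (auto simp: is_cup_tri)
  have pS: "p \<in> S" "r \<in> S" "q \<in> S" "s \<in> S" using C1ne C2ne p_r_q_s_def hd_in_set last_in_set by blast+
  have "length C1 \<ge> 2" using len1 assms(2) by simp
  then obtain X1 c r' where C1eq: "C1 = X1 @ [c, r']" using split2_end[of C1] by blast
  have r'r: "r' = r" using C1eq p_r_q_s_def by simp
  obtain q' d Y2 where C2eq: "C2 = q' # d # Y2" using len2 assms(2) by (cases C2; cases "tl C2") auto
  have q'q: "q' = q" using C2eq p_r_q_s_def by simp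
  have cS: "c \<in> S" "d \<in> S" using C1eq C2eq C1ne C2ne by auto
  have cr: "c < r" using C1ne(3) C1eq r'r by (simp add: sorted_wrt_append)
  have qd: "q < d" using C2ne(3) C2eq q'q by simp
  have C1le: "x \<le> r" if "x \<in> set C1" for x using sw_last[OF C1ne(3) that] p_r_q_s_def by simp
  have C2ge: "q \<le> x" if "x \<in> set C2" for x using sw_hd[OF C2ne(3) that] p_r_q_s_def by simp
  have K1: "\<not> cupT c r t" if "t \<in> S" "r < t" for t
  proof
    assume ct: "cupT c r t"
    have "is_cup S cupT (C1 @ [t])"
      unfolding is_cup_tri
    proof (intro conjI)
      show "sorted_wrt (<) (C1 @ [t])" using C1ne(3) C1le that by (force simp: sorted_wrt_append)
      show "tri cupT (C1 @ [t])" using C1ne(4) ct C1eq r'r by (intro tri_append) auto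
    qed (use C1ne that in auto)
    then show False using nocup len1 assms(2) by force
  qed
  have K2: "\<not> cupT t q d" if "t \<in> S" "t < q" for t
  proof
    assume ct: "cupT t q d"
    have "is_cup S cupT (t # C2)"
      unfolding is_cup_tri
    proof (intro conjI)
      show "sorted_wrt (<) (t # C2)" using C2ne(3) C2ge that by force
      show "tri cupT (t # C2)" using C2ne(4) ct C2eq q'q by simp
    qed (use C2ne that in auto)
    then show False using nocup len2 assms(2) by force
  qed
  show ?thesis
  proof (cases "q < r")
    case True
    note qlr = True
    show ?thesis
    proof (cases "cupT p q r \<and> cupT q r s")
      case False
      show ?thesis
      proof (cases "cupT p q r")
        case False
        then show ?thesis by (rule gon[OF pS(3) pq qlr _ C1c len1 ends(1,2)])
      next
        case True
        then have "\<not> cupT q r s" using \<open>\<not> (cupT p q r \<and> cupT q r s)\<close> by simp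
        then show ?thesis by (rule gon[OF pS(2) qlr rs _ C2c len2 ends(3,4)])
      qed
    next
      case True
      then have G1: "cupT p q r" and G2: "cupT q r s" by auto
      obtain Cp1 Cq1 where Cp1: "is_cup S cupT Cp1" "last Cp1 = hd C1" and Cq1: "is_cup S cupT Cq1" "hd Cq1 = last C1"
        and lac1: "length Cp1 + length Cq1 = n - 1"
        using L1 unfolding laced_def by blast
      obtain Cp2 Cq2 where Cp2: "is_cup S cupT Cp2" "last Cp2 = hd C2" and Cq2: "is_cup S cupT Cq2" "hd Cq2 = last C2"
        and lac2: "length Cp2 + length Cq2 = n - 1"
        using L2 unfolding laced_def by blast
      have Cp1': "last Cp1 = p" and Cq1': "hd Cq1 = r" and Cp2': "last Cp2 = q" and Cq2': "hd Cq2 = s"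
        using Cp1(2) Cq1(2) Cp2(2) Cq2(2) ends by simp_all
      have P1: "Cp1 \<noteq> []" "set Cp1 \<subseteq> S" "sorted_wrt (<) Cp1" "tri cupT Cp1" using Cp1 by (auto simp: is_cup_tri)
      have Q1: "Cq1 \<noteq> []" "set Cq1 \<subseteq> S" "sorted_wrt (<) Cq1" "tri cupT Cq1" using Cq1 by (auto simp: is_cup_tri)
      have P2: "Cp2 \<noteq> []" "set Cp2 \<subseteq> S" "sorted_wrt (<) Cp2" "tri cupT Cp2" using Cp2 by (auto simp: is_cup_tri)
      have Q2: "Cq2 \<noteq> []" "set Cq2 \<subseteq> S" "sorted_wrt (<) Cq2" "tri cupT Cq2" using Cq2 by (auto simp: is_cup_tri)
      have "\<exists>v. v \<in> S \<and> r < v \<and> \<not> cupT q r v"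
      proof (rule ccontr)
        assume "\<not> (\<exists>v. v \<in> S \<and> r < v \<and> \<not> cupT q r v)"
        then have H: "\<And>v. v \<in> S \<Longrightarrow> r < v \<Longrightarrow> cupT q r v" by blast
        have "is_cup S cupT (Cp1 @ q # Cq1)" unfolding is_cup_tri
        proof (intro conjI)
          have a: "\<forall>x\<in>set Cq1. q < x" using sw_hd[OF Q1(3)] Cq1' qlr by (metis less_le_trans)
          have b: "\<forall>x\<in>set Cp1. x \<le> p" using sw_last[OF P1(3)] Cp1' by auto
          have c: "\<forall>x\<in>set Cp1. \<forall>y\<in>set (q # Cq1). x < y" using a b pq
            by (metis le_less_trans less_trans set_ConsD)
          show "sorted_wrt (<) (Cp1 @ q # Cq1)" using P1(3) Q1(3) a c
            by (simp add: sorted_wrt_append)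
          have t1: "tri cupT (q # Cq1)"
          proof -
            have "tri cupT ([q] @ Cq1)"
            proof (rule tri_append)
              show "[q] \<noteq> [] \<Longrightarrow> 2 \<le> length Cq1 \<Longrightarrow> cupT (last [q]) (hd Cq1) (hd (tl Cq1))"
              proof -
                assume "2 \<le> length Cq1"
                then have "hd (tl Cq1) \<in> set (tl Cq1)" by (rule tl_in)
                moreover then have "hd (tl Cq1) \<in> S" using Q1(2) by (cases Cq1) auto
                ultimately show ?thesis using H sw_tl[OF Q1(3)] Cq1' by auto
              qed
            qed (use Q1 in auto)
            then show ?thesis by simp
          qed
          show "tri cupT (Cp1 @ q # Cq1)"
          proof (rule tri_append[OF P1(4) t1])
            show "cupT (last (butlast Cp1)) (last Cp1) (hd (q # Cq1))" if "2 \<le> length Cp1"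
            proof (rule ccontr)
              assume nc: "\<not> cupT (last (butlast Cp1)) (last Cp1) (hd (q # Cq1))"
              have "last (butlast Cp1) \<in> S" using bl_in[OF that] P1(2) by auto
              moreover have "last (butlast Cp1) < p" using sw_butlast[OF P1(3) bl_in2[OF that]] Cp1' by auto
              ultimately show False using nocap[of "last (butlast Cp1)" p q d] nc K2[of p] pS cS pq qd Cp1' by auto
            qed
            show "cupT (last Cp1) (hd (q # Cq1)) (hd (tl (q # Cq1)))" using G1 Cp1' Cq1' by simp
          qed
        qed (use P1 Q1 pS in auto)
        moreover have "length (Cp1 @ q # Cq1) = n" using lac1 assms(2) by simp
        ultimately show False using nocup by blast
      qed
      then obtain v where v: "v \<in> S" "r < v" "\<not> cupT q r v" by blast
      have "\<exists>u. u \<in> S \<and> u < q \<and> \<not> cupT u q r"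
      proof (rule ccontr)
        assume "\<not> (\<exists>u. u \<in> S \<and> u < q \<and> \<not> cupT u q r)"
        then have H: "\<And>u. u \<in> S \<Longrightarrow> u < q \<Longrightarrow> cupT u q r" by blast
        have "is_cup S cupT (Cp2 @ r # Cq2)" unfolding is_cup_tri
        proof (intro conjI)
          have a: "\<forall>x\<in>set Cq2. r < x" using sw_hd[OF Q2(3)] Cq2' rs by (metis less_le_trans)
          have b: "\<forall>x\<in>set Cp2. x \<le> q" using sw_last[OF P2(3)] Cp2' by auto
          have c: "\<forall>x\<in>set Cp2. \<forall>y\<in>set (r # Cq2). x < y" using a b qlr
            by (metis le_less_trans less_trans set_ConsD)
          show "sorted_wrt (<) (Cp2 @ r # Cq2)" using P2(3) Q2(3) a c
            by (simp add: sorted_wrt_append)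
          have t1: "tri cupT (r # Cq2)"
          proof -
            have "tri cupT ([r] @ Cq2)"
            proof (rule tri_append)
              show "[r] \<noteq> [] \<Longrightarrow> 2 \<le> length Cq2 \<Longrightarrow> cupT (last [r]) (hd Cq2) (hd (tl Cq2))"
              proof -
                assume "2 \<le> length Cq2"
                then have "hd (tl Cq2) \<in> set (tl Cq2)" by (rule tl_in)
                moreover then have wS: "hd (tl Cq2) \<in> S" using Q2(2) by (cases Cq2) auto
                moreover have "s < hd (tl Cq2)" using calculation sw_tl[OF Q2(3)] Cq2' by auto
                ultimately show ?thesis using nocap[of c r s "hd (tl Cq2)"] K1[of s] cS pS cr rs Cq2' by auto
              qed
            qed (use Q2 in auto)
            then show ?thesis by simp
          qed
          show "tri cupT (Cp2 @ r # Cq2)"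
          proof (rule tri_append[OF P2(4) t1])
            show "cupT (last (butlast Cp2)) (last Cp2) (hd (r # Cq2))" if "2 \<le> length Cp2"
            proof -
              have "last (butlast Cp2) \<in> S" using bl_in[OF that] P2(2) by auto
              moreover have "last (butlast Cp2) < q" using sw_butlast[OF P2(3) bl_in2[OF that]] Cp2' by auto
              ultimately show ?thesis using H Cp2' by auto
            qed
            show "cupT (last Cp2) (hd (r # Cq2)) (hd (tl (r # Cq2)))" using G2 Cp2' Cq2' by simp
          qed
        qed (use P2 Q2 pS in auto)
        moreover have "length (Cp2 @ r # Cq2) = n" using lac2 assms(2) by simp
        ultimately show False using nocup by blast
      qed
      then obtain u where u: "u \<in> S" "u < q" "\<not> cupT u q r" by blast
      show ?thesis using nocap[of u q r v] u v pS qlr by auto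
    qed

  next
    case False
    then have qr: "q = r" using qr by simp
    have rd: "r < d" using qd qr by simp
    show ?thesis
    proof (cases "n = 3")
      case True
      then have X1n: "X1 = []" using len1 C1eq by simp
      then have pc: "p = c" using C1eq ends by simp
      have Y2n: "Y2 = []" using len2 C2eq True by simp
      then have sd: "s = d" using C2eq ends by simp
      have B: "is_cup S cupT [p, s]" using pS pq qr rs by (auto simp: is_cup_tri)
      show ?thesis
        by (rule gon[OF pS(2) _ rs _ B]) (use pq qr K1[of s] pS rs pc True in auto)
    next
      case False
      then have n4: "n \<ge> 4" using assms(2) by simp
      then have "X1 \<noteq> []" using len1 C1eq by (cases X1) auto
      then obtain X1' c' where X1eq: "X1 = X1' @ [c']" by (cases X1 rule: rev_exhaust) auto
      have "Y2 \<noteq> []" using len2 C2eq n4 by (cases Y2) auto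
      then obtain d3 Y2' where Y2eq: "Y2 = d3 # Y2'" by (cases Y2) auto
      have sC1: "sorted_wrt (<) (X1' @ [c', c, r])" using C1ne(3) C1eq X1eq r'r by simp
      have c'c: "c' < c" using sC1 by (simp add: sorted_wrt_append)
      have dd3: "d < d3" using C2ne(3) C2eq Y2eq by simp
      have c'S: "c' \<in> S" "d3 \<in> S" using C1ne(2) C1eq X1eq C2ne(2) C2eq Y2eq by auto
      show ?thesis
      proof (cases "cupT c' c d")
        case True
        define B where "B = X1' @ [c', c, d]"
        have "is_cup S cupT B" unfolding is_cup_tri
        proof (intro conjI)
          show "B \<noteq> []" using B_def by simp
          show "set B \<subseteq> S" using C1ne(2) C1eq X1eq B_def cS by auto
          have a: "\<forall>x\<in>set (X1' @ [c', c]). x < r" using sC1 by (simp add: sorted_wrt_append)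
          have "\<forall>x\<in>set (X1' @ [c', c]). x < d" using a rd by (metis less_trans)
          moreover have "sorted_wrt (<) (X1' @ [c', c])" using sC1 by (simp add: sorted_wrt_append)
          ultimately have "sorted_wrt (<) ((X1' @ [c', c]) @ [d])" by (simp add: sorted_wrt_append)
          then show "sorted_wrt (<) B" using B_def by simp
          have t: "tri cupT ((X1' @ [c', c]) @ [r])" using C1ne(4) C1eq X1eq r'r by simp
          have "tri cupT ((X1' @ [c', c]) @ [d])"
            by (rule tri_append[OF tri_prefix[OF t]]) (use True in simp_all)
          then show "tri cupT B" using B_def by simp
        qed
        moreover have "length B = n - 1" using B_def len1 C1eq X1eq by simp
        moreover have "hd B = p" using B_def ends C1eq X1eq by (cases X1') auto
        moreover have "last B = d" using B_def by simp
        moreover have "p < r" using pq qr by simp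
        ultimately show ?thesis using gon[OF pS(2) _ rd _] K2[of p] pS qr by auto
      next
        case False
        note nc1 = False
        show ?thesis
        proof (cases "cupT c d d3")
          case True
          define B where "B = c # d # d3 # Y2'"
          have "is_cup S cupT B" unfolding is_cup_tri
          proof (intro conjI)
            show "B \<noteq> []" using B_def by simp
            show "set B \<subseteq> S" using C2ne(2) C2eq Y2eq B_def cS by auto
            have a: "\<forall>x\<in>set (d # d3 # Y2'). q < x" using C2ne(3) C2eq Y2eq q'q by simp
            then have "\<forall>x\<in>set (d # d3 # Y2'). c < x" using cr qr by (metis less_trans)
            moreover have "sorted_wrt (<) (d # d3 # Y2')" using C2ne(3) C2eq Y2eq by simp
            ultimately show "sorted_wrt (<) B" using B_def by simp
            have "tri cupT (d # d3 # Y2')" using C2ne(4) C2eq Y2eq by simp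
            then show "tri cupT B" using B_def True by simp
          qed
          moreover have "length B = n - 1" using B_def len2 C2eq Y2eq by simp
          moreover have "hd B = c" using B_def by simp
          moreover have "last B = s" using B_def ends C2eq Y2eq by simp
          ultimately show ?thesis using gon[OF pS(2) cr rs _] K1[of s] pS rs by auto
        next
          case False
          then show ?thesis using nocap[of c' c d d3] nc1 c'S cS c'c cr rd dd3 by (meson less_trans)
        qed
      qed
    qed
  qed
qed

end
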